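(* Let $Q$ be a finite interval order and let $A$ and $B$ be disjoint subsets of the ground set of $Q$. Then there exists a linear extension $L$ of $Q$ such that $a > b$ in $L$ for every $a \in A$ and $b \in B$ with $a$ and $b$ incomparable in $Q$.
   Context: Posets are finite and reflexive. A finite poset $P$ is an interval order if each element $x$ can be assigned a closed bounded real interval $[\ell(x), r(x)]$ such that for distinct $x,y$, $x<y$ in $P$ if and only if $r(x) < \ell(y)$. A linear extension of $P$ is a total order $L$ on the ground set of $P$ such that $x<y$ in $P$ implies $x<y$ in $L$. *)

theory Defs
  imports Complex_Main
begin

text \<open>A finite poset is represented by a finite ground set X and a partial order
  relation P on X (as a set of pairs, reflexive on X). (x,y) \<in> P means x \<le> y.\<close>

definition finite_poset :: "'a set \<Rightarrow> 'a rel \<Rightarrow> bool" where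
  "finite_poset X P \<longleftrightarrow> finite X \<and> partial_order_on X P \<and> P \<subseteq> X \<times> X"

definition interval_order :: "'a set \<Rightarrow> 'a rel \<Rightarrow> bool" where
  "interval_order X P \<longleftrightarrow> finite_poset X P \<and>
     (\<exists>l r :: 'a \<Rightarrow> real. (\<forall>x\<in>X. l x \<le> r x) \<and>
        (\<forall>x\<in>X. \<forall>y\<in>X. x \<noteq> y \<longrightarrow> ((x, y) \<in> P \<longleftrightarrow> r x < l y)))"

definition incomparable :: "'a rel \<Rightarrow> 'a \<Rightarrow> 'a \<Rightarrow> bool" where
  "incomparable P x y \<longleftrightarrow> (x, y) \<notin> P \<and> (y, x) \<notin> P"

definition linear_extension :: "'a set \<Rightarrow> 'a rel \<Rightarrow> 'a rel \<Rightarrow> bool" where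
  "linear_extension X P L \<longleftrightarrow> linear_order_on X L \<and> L \<subseteq> X \<times> X \<and> P \<subseteq> L"

end

theory Submission
  imports Defs "HOL-Library.Product_Lexorder"
begin

theorem lemma1:
  fixes X :: "'a set" and Q :: "'a rel" and A B :: "'a set"
  assumes "interval_order X Q"
    and "A \<subseteq> X" and "B \<subseteq> X" and "A \<inter> B = {}"
  shows "\<exists>L. linear_extension X Q L \<and>
           (\<forall>a\<in>A. \<forall>b\<in>B. incomparable Q a b \<longrightarrow> (b, a) \<in> L \<and> a \<noteq> b)"
proof -
  from assms(1) obtain l r :: "'a \<Rightarrow> real" where lr: "\<forall>x\<in>X. l x \<le> r x"
    and Qc: "\<forall>x\<in>X. \<forall>y\<in>X. x \<noteq> y \<longrightarrow> ((x, y) \<in> Q \<longleftrightarrow> r x < l y)"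
    and fp: "finite_poset X Q" unfolding interval_order_def by blast
  have fin: "finite X" and po: "partial_order_on X Q" and sub: "Q \<subseteq> X \<times> X"
    using fp unfolding finite_poset_def by auto
  obtain i :: "'a \<Rightarrow> nat" where inj: "inj_on i X"
    using fin finite_imp_inj_to_nat_seg by blast
  define v where "v x = (if x \<in> A then r x else l x)" for x
  define t :: "'a \<Rightarrow> nat" where "t x = (if x \<in> B then 0 else if x \<in> A then 2 else 1)" for x
  define k where "k x = (v x, t x, i x)" for x
  have kinj: "inj_on k X" using inj unfolding k_def inj_on_def by auto
  define L where "L = {(x,y). x \<in> X \<and> y \<in> X \<and> k x \<le> k y}"
  have lin: "linear_order_on X L"
    unfolding linear_order_on_def partial_order_on_def preorder_on_def refl_on_def trans_def
      antisym_def total_on_def L_def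
    using kinj by (auto simp: inj_on_def dest: order_trans)
  have vle: "v x < v y" if "x \<in> X" "y \<in> X" "x \<noteq> y" "(x,y) \<in> Q" for x y
  proof -
    have "r x < l y" using Qc that by blast
    moreover have "v x \<le> r x" "l y \<le> v y" using lr that unfolding v_def by auto
    ultimately show ?thesis by linarith
  qed
  have ext: "Q \<subseteq> L"
  proof
    fix p assume "p \<in> Q"
    then obtain x y where p: "p = (x,y)" "(x,y) \<in> Q" "x \<in> X" "y \<in> X" using sub by auto
    show "p \<in> L"
    proof (cases "x = y")
      case True thus ?thesis using p unfolding L_def by auto
    next
      case False
      hence "v x < v y" using vle p by auto
      thus ?thesis using p unfolding L_def k_def by (auto simp: less_eq_prod_def)
    qed
  qed
  have inc: "(b, a) \<in> L \<and> a \<noteq> b" if "a \<in> A" "b \<in> B" "incomparable Q a b" for a b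
  proof -
    have ab: "a \<noteq> b" "a \<in> X" "b \<in> X" "a \<notin> B" "b \<notin> A" using that assms(2-4) by auto
    have "\<not> r a < l b" "\<not> r b < l a" using that ab Qc unfolding incomparable_def by auto
    hence "v b \<le> v a" using ab lr that unfolding v_def by auto
    moreover have "t b < t a" using ab that unfolding t_def by auto
    ultimately show ?thesis using ab unfolding L_def k_def
      by (auto simp: less_eq_prod_def less_prod_def)
  qed
  show ?thesis
    by (rule exI[of _ L]) (use lin ext inc in \<open>auto simp: linear_extension_def L_def\<close>)
qed

end
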